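(* Let $\alpha(\cdot,t)$ be a solution of the length-constrained elastic flow $$\partial_t\alpha=\Big(k_{ss}+\tfrac12k^3-\lambda(t)k\Big)\nu,\qquad \lambda(t)=\frac{-\int_\alpha k_s^2\,ds+\frac12\int_\alpha k^4\,ds}{\int_\alpha k^2\,ds},$$ with generalised Neumann boundary conditions in a cone with $\omega=\frac{\theta_1-\theta_2}{2\pi}$, and let $L_0$ be the length of the initial curve. Then, while the solution exists, $$-\frac{L_0\int_\alpha k_s^2\,ds}{(2\pi\omega)^2}\le\lambda(t)\le\frac{2L_0}{\pi}\int_\alpha k_s^2\,ds+\bar k^2.$$
   Context: The cone: fix $0\le\theta_2<\theta_1<2\pi$; its boundary consists of the open rays $\bar\gamma_i=\{(\rho\cos\theta_i,\rho\sin\theta_i):\rho>0\}$, $i=1,2$. Generalised Neumann boundary conditions: for each $t$ the curve's interior lies in the open cone between the rays, $\alpha(-1,t)\in\bar\gamma_1$, $\alpha(1,t)\in\bar\gamma_2$, the curve meets each ray perpendicularly at its endpoint, and $k_s(\pm1,t)=0$. Here $s$ is arc length, $\nu$ the outer unit normal, $k=-\langle\alpha_{ss},\nu\rangle$ the scalar curvature (so $\int_\alpha k\,ds=2\pi\omega$), $L$ the length, and $\bar k=\frac1L\int_\alpha k\,ds$. Integrals are over $\alpha(\cdot,t)$ with respect to arc length. *)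

theory Defs
  imports "HOL-Analysis.Analysis"
begin

text \<open>Curves in the plane are complex-valued; a time-dependent curve is a map
  alpha :: real \<times> real \<Rightarrow> complex, (u,t) with u in [-1,1] the parameter and t the time.\<close>

definition pD1 :: "(real \<times> real \<Rightarrow> 'a::real_normed_vector) \<Rightarrow> real \<times> real \<Rightarrow> 'a" where
  "pD1 f p = vector_derivative (\<lambda>v. f (v, snd p)) (at (fst p))"

definition pD2 :: "(real \<times> real \<Rightarrow> 'a::real_normed_vector) \<Rightarrow> real \<times> real \<Rightarrow> 'a" where
  "pD2 f p = vector_derivative (\<lambda>s. f (fst p, s)) (at (snd p))"

fun pderivs :: "bool list \<Rightarrow> (real \<times> real \<Rightarrow> 'a::real_normed_vector) \<Rightarrow> real \<times> real \<Rightarrow> 'a" where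
  "pderivs [] f = f"
| "pderivs (b # bs) f = (if b then pD1 (pderivs bs f) else pD2 (pderivs bs f))"

definition smooth_on :: "(real \<times> real) set \<Rightarrow> (real \<times> real \<Rightarrow> 'a::real_normed_vector) \<Rightarrow> bool" where
  "smooth_on S f \<longleftrightarrow> open S \<and>
     (\<forall>bs. continuous_on S (pderivs bs f) \<and>
        (\<forall>p\<in>S. (\<lambda>v. pderivs bs f (v, snd p)) differentiable (at (fst p)) \<and>
               (\<lambda>s. pderivs bs f (fst p, s)) differentiable (at (snd p))))"

definition sdiff :: "(real \<times> real \<Rightarrow> complex) \<Rightarrow> (real \<times> real \<Rightarrow> 'a::real_normed_vector) \<Rightarrow> real \<times> real \<Rightarrow> 'a" where
  "sdiff \<alpha> g p = (1 / norm (pD1 \<alpha> p)) *\<^sub>R pD1 g p"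

definition tangent :: "(real \<times> real \<Rightarrow> complex) \<Rightarrow> real \<times> real \<Rightarrow> complex" where
  "tangent \<alpha> = sdiff \<alpha> \<alpha>"

text \<open>Outer unit normal: the unit tangent rotated by +90 degrees (for a curve running from
  the ray at angle theta1 to the ray at angle theta2 < theta1, this points away from the vertex,
  and gives total curvature theta1 - theta2 for circular arcs about the vertex).\<close>
definition normal :: "(real \<times> real \<Rightarrow> complex) \<Rightarrow> real \<times> real \<Rightarrow> complex" where
  "normal \<alpha> p = \<i> * tangent \<alpha> p"

definition curv :: "(real \<times> real \<Rightarrow> complex) \<Rightarrow> real \<times> real \<Rightarrow> real" where
  "curv \<alpha> p = - (sdiff \<alpha> (sdiff \<alpha> \<alpha>) p \<bullet> normal \<alpha> p)"

definition arc_int :: "(real \<times> real \<Rightarrow> complex) \<Rightarrow> real \<Rightarrow> (real \<times> real \<Rightarrow> real) \<Rightarrow> real" where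
  "arc_int \<alpha> t g = integral {-1..1} (\<lambda>u. g (u, t) * norm (pD1 \<alpha> (u, t)))"

definition curve_length :: "(real \<times> real \<Rightarrow> complex) \<Rightarrow> real \<Rightarrow> real" where
  "curve_length \<alpha> t = arc_int \<alpha> t (\<lambda>_. 1)"

definition mean_curv :: "(real \<times> real \<Rightarrow> complex) \<Rightarrow> real \<Rightarrow> real" where
  "mean_curv \<alpha> t = arc_int \<alpha> t (curv \<alpha>) / curve_length \<alpha> t"

definition elastic_lambda :: "(real \<times> real \<Rightarrow> complex) \<Rightarrow> real \<Rightarrow> real" where
  "elastic_lambda \<alpha> t =
     (- arc_int \<alpha> t (\<lambda>p. (sdiff \<alpha> (curv \<alpha>) p)^2) + 1/2 * arc_int \<alpha> t (\<lambda>p. (curv \<alpha> p)^4))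
     / arc_int \<alpha> t (\<lambda>p. (curv \<alpha> p)^2)"

definition ray :: "real \<Rightarrow> complex set" where
  "ray \<theta> = {complex_of_real \<rho> * cis \<theta> | \<rho>. \<rho> > 0}"

definition open_cone :: "real \<Rightarrow> real \<Rightarrow> complex set" where
  "open_cone \<theta>1 \<theta>2 = {complex_of_real \<rho> * cis \<phi> | \<rho> \<phi>. \<rho> > 0 \<and> \<theta>2 < \<phi> \<and> \<phi> < \<theta>1}"

definition gen_neumann :: "real \<Rightarrow> real \<Rightarrow> (real \<times> real \<Rightarrow> complex) \<Rightarrow> real \<Rightarrow> bool" where
  "gen_neumann \<theta>1 \<theta>2 \<alpha> t \<longleftrightarrow>
     (\<forall>u\<in>{-1<..<1}. \<alpha> (u, t) \<in> open_cone \<theta>1 \<theta>2) \<and>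
     \<alpha> (-1, t) \<in> ray \<theta>1 \<and> \<alpha> (1, t) \<in> ray \<theta>2 \<and>
     tangent \<alpha> (-1, t) \<bullet> cis \<theta>1 = 0 \<and> tangent \<alpha> (1, t) \<bullet> cis \<theta>2 = 0 \<and>
     sdiff \<alpha> (curv \<alpha>) (-1, t) = 0 \<and> sdiff \<alpha> (curv \<alpha>) (1, t) = 0"

end

theory Submission
  imports Defs
begin



lemma cs_w:
  fixes f h w :: "real \<Rightarrow> real"
  assumes cf: "continuous_on {a..b} f" and ch: "continuous_on {a..b} h"
    and cw: "continuous_on {a..b} w" and w0: "\<And>x. x \<in> {a..b} \<Longrightarrow> 0 \<le> w x"
  shows "(integral {a..b} (\<lambda>x. f x * h x * w x))^2
    \<le> integral {a..b} (\<lambda>x. (f x)^2 * w x) * integral {a..b} (\<lambda>x. (h x)^2 * w x)"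
proof -
  define X where "X = integral {a..b} (\<lambda>x. (f x)^2 * w x)"
  define Y where "Y = integral {a..b} (\<lambda>x. f x * h x * w x)"
  define Z where "Z = integral {a..b} (\<lambda>x. (h x)^2 * w x)"
  have iX: "((\<lambda>x. (f x)^2 * w x) has_integral X) {a..b}" unfolding X_def
    by (intro integrable_integral integrable_continuous_interval continuous_intros cf cw)
  have iY: "((\<lambda>x. f x * h x * w x) has_integral Y) {a..b}" unfolding Y_def
    by (intro integrable_integral integrable_continuous_interval continuous_intros cf cw ch)
  have iZ: "((\<lambda>x. (h x)^2 * w x) has_integral Z) {a..b}" unfolding Z_def
    by (intro integrable_integral integrable_continuous_interval continuous_intros ch cw)
  have q: "0 \<le> s^2 * X - 2 * s * Y + Z" for s
  proof -
    have "((\<lambda>x. s^2 * ((f x)^2 * w x) - (2 * s) * (f x * h x * w x) + (h x)^2 * w x) has_integral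
        (s^2 * X - 2 * s * Y + Z)) {a..b}"
      by (intro has_integral_add has_integral_diff has_integral_mult_right iX iY iZ)
    moreover have "\<And>x. x \<in> {a..b} \<Longrightarrow> 0 \<le> s^2 * ((f x)^2 * w x) - (2 * s) * (f x * h x * w x) + (h x)^2 * w x"
    proof -
      fix x assume "x \<in> {a..b}"
      have "s^2 * ((f x)^2 * w x) - (2 * s) * (f x * h x * w x) + (h x)^2 * w x = (s * f x - h x)^2 * w x"
        by (simp add: power2_eq_square algebra_simps)
      also have "\<dots> \<ge> 0" using w0[OF \<open>x \<in> {a..b}\<close>] by simp
      finally show "0 \<le> s^2 * ((f x)^2 * w x) - (2 * s) * (f x * h x * w x) + (h x)^2 * w x" .
    qed
    ultimately show ?thesis by (rule has_integral_nonneg)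
  qed
  have "Y^2 \<le> X * Z"
  proof (cases "X = 0")
    case True
    show ?thesis
    proof (rule ccontr)
      assume "\<not> ?thesis"
      then have "Y \<noteq> 0" using True by simp
      have "0 \<le> ((Z+1)/(2*Y))^2 * X - 2 * ((Z+1)/(2*Y)) * Y + Z" by (rule q)
      then show False using True \<open>Y \<noteq> 0\<close> by simp
    qed
  next
    case False
    have X0: "X \<ge> 0" using iX by (rule has_integral_nonneg) (simp add: w0)
    then have Xp: "X > 0" using False by simp
    have "0 \<le> (Y/X)^2 * X - 2 * (Y/X) * Y + Z" by (rule q)
    then have "0 \<le> (Z * X - Y^2) / X" using Xp by (simp add: field_simps power2_eq_square)
    then show ?thesis using Xp by (simp add: zero_le_divide_iff mult.commute)
  qed
  then show ?thesis by (simp add: X_def Y_def Z_def)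
qed

lemma l65: "(X1 * A1) * (X2 * A2) \<le> ((X1 * A2 + X2 * A1)/2)^2" for X1 :: real
proof -
  have "((X1 * A2 + X2 * A1)/2)^2 - (X1 * A1) * (X2 * A2) = ((X1 * A2 - X2 * A1)/2)^2"
    by (simp add: power2_eq_square algebra_simps divide_simps)
  then show ?thesis by (smt (verit) zero_le_power2)
qed

lemma alg_cs2:
  fixes a b X1 X2 A1 A2 :: real
  assumes "a^2 \<le> X1 * A1" "b^2 \<le> X2 * A2" "X1 \<ge> 0" "X2 \<ge> 0" "A1 \<ge> 0" "A2 \<ge> 0"
  shows "(a - b)^2 \<le> (X1 + X2) * (A1 + A2)"
proof -
  have "(\<bar>a\<bar> * \<bar>b\<bar>)^2 = a^2 * b^2" by (simp add: power_mult_distrib)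
  also have "\<dots> \<le> (X1 * A1) * (X2 * A2)" by (rule mult_mono) (use assms in auto)
  also have "\<dots> \<le> ((X1 * A2 + X2 * A1)/2)^2" by (rule l65)
  finally have "\<bar>a\<bar> * \<bar>b\<bar> \<le> (X1 * A2 + X2 * A1)/2"
    by (rule power2_le_imp_le) (use assms in auto)
  moreover have "- (a * b) \<le> \<bar>a\<bar> * \<bar>b\<bar>"
    unfolding abs_mult[symmetric] by (rule abs_ge_minus_self)
  moreover have "(a - b)^2 = a^2 + b^2 - 2 * (a * b)" by (simp add: power2_eq_square algebra_simps)
  moreover have "(X1 + X2) * (A1 + A2) = X1 * A1 + X2 * A2 + 2 * ((X1 * A2 + X2 * A1)/2)"
    by (simp add: algebra_simps)
  ultimately show ?thesis using assms(1,2) by linarith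
qed

lemma cube_id: "(x::real)^3/3 + (L - x)^3/3 = L^3/3 - L * x * (L - x)"
  by (simp add: power3_eq_cube field_simps)

lemma deriv_sub:
  fixes f :: "real \<Rightarrow> real"
  shows "(f has_real_derivative D) (at x within S) \<Longrightarrow> T \<subseteq> S \<Longrightarrow> (f has_vector_derivative D) (at x within T)"
  unfolding has_real_derivative_iff_has_vector_derivative[symmetric] by (rule has_field_derivative_subset)

lemma green_bound:
  fixes S K Ks :: "real \<Rightarrow> real" and u :: real
  assumes Sc: "continuous_on {-1..1} S" and S0: "\<And>x. x \<in> {-1..1} \<Longrightarrow> 0 \<le> S x"
    and Kd: "\<And>x. x \<in> {-1..1} \<Longrightarrow> (K has_real_derivative (Ks x * S x)) (at x within {-1..1})"
    and Ksc: "continuous_on {-1..1} Ks"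
    and Lpos: "integral {-1..1} S > 0"
    and u: "u \<in> {-1..1}"
  shows "(K u - integral {-1..1} (\<lambda>x. K x * S x) / integral {-1..1} S)^2
      \<le> integral {-1..1} S / 3 * integral {-1..1} (\<lambda>x. (Ks x)^2 * S x)"
proof -
  define L where "L = integral {-1..1} S"
  define P where "P = integral {-1..1} (\<lambda>x. K x * S x)"
  define A where "A = integral {-1..1} (\<lambda>x. (Ks x)^2 * S x)"
  define s where "s v = integral {-1..v} S" for v
  have Lp: "L > 0" using Lpos L_def by simp
  have Kc: "continuous_on {-1..1} K"
    using Kd by (metis DERIV_continuous continuous_at_imp_continuous_on continuous_on_eq_continuous_within)
  have u1: "-1 \<le> u" "u \<le> 1" using u by auto
  have sub1: "{-1..u} \<subseteq> {-1..1}" "{u..1} \<subseteq> {-1..1}" using u1 by auto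
  have sd: "(s has_real_derivative S x) (at x within {-1..1})" if "x \<in> {-1..1}" for x
    unfolding s_def has_real_derivative_iff_has_vector_derivative
    by (rule integral_has_vector_derivative[OF Sc that])
  have sc: "continuous_on {-1..1} s"
    using sd by (metis DERIV_continuous continuous_at_imp_continuous_on continuous_on_eq_continuous_within)
  have s_m1: "s (-1) = 0" by (simp add: s_def)
  have s_1: "s 1 = L" by (simp add: s_def L_def)
  have intS: "S integrable_on {-1..1}" by (rule integrable_continuous_interval[OF Sc])
  have su_split: "s u + integral {u..1} S = L"
    unfolding s_def L_def using Henstock_Kurzweil_Integration.integral_combine[OF u1 intS] .
  have su0: "0 \<le> s u" unfolding s_def
    by (rule integral_nonneg) (use integrable_on_subinterval[OF intS sub1(1)] S0 u1 in auto)
  have su1: "0 \<le> integral {u..1} S"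
    by (rule integral_nonneg) (use integrable_on_subinterval[OF intS sub1(2)] S0 u1 in auto)
  have cont_sub: "continuous_on T f" if "continuous_on {-1..1} f" "T \<subseteq> {-1..1}" for f :: "real \<Rightarrow> real" and T
    using continuous_on_subset that by blast
  define J1 where "J1 = integral {-1..u} (\<lambda>x. K x * S x)"
  define J2 where "J2 = integral {u..1} (\<lambda>x. K x * S x)"
  define A1 where "A1 = integral {-1..u} (\<lambda>x. (Ks x)^2 * S x)"
  define A2 where "A2 = integral {u..1} (\<lambda>x. (Ks x)^2 * S x)"
  define I1 where "I1 = integral {-1..u} (\<lambda>x. s x * Ks x * S x)"
  define I2 where "I2 = integral {u..1} (\<lambda>x. (L - s x) * Ks x * S x)"
  have intKS: "(\<lambda>x. K x * S x) integrable_on {-1..1}"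
    by (intro integrable_continuous_interval continuous_intros Kc Sc)
  have intA: "(\<lambda>x. (Ks x)^2 * S x) integrable_on {-1..1}"
    by (intro integrable_continuous_interval continuous_intros Ksc Sc)
  have JJ: "J1 + J2 = P" unfolding J1_def J2_def P_def using Henstock_Kurzweil_Integration.integral_combine[OF u1 intKS] .
  have AA: "A1 + A2 = A" unfolding A1_def A2_def A_def using Henstock_Kurzweil_Integration.integral_combine[OF u1 intA] .
  have A10: "A1 \<ge> 0" unfolding A1_def
    by (rule integral_nonneg) (use integrable_on_subinterval[OF intA sub1(1)] S0 u1 in auto)
  have A20: "A2 \<ge> 0" unfolding A2_def
    by (rule integral_nonneg) (use integrable_on_subinterval[OF intA sub1(2)] S0 u1 in auto)
  have ibp1: "((\<lambda>x. S x * K x + s x * Ks x * S x) has_integral (s u * K u - s (-1) * K (-1))) {-1..u}"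
  proof (rule fundamental_theorem_of_calculus[OF u1(1)])
    fix x assume x: "x \<in> {-1..u}"
    then have x1: "x \<in> {-1..1}" using u1 by auto
    have "((\<lambda>x. s x * K x) has_real_derivative (S x * K x + s x * (Ks x * S x))) (at x within {-1..1})"
      by (rule derivative_eq_intros sd[OF x1] Kd[OF x1] refl)+ (simp add: algebra_simps)
    then show "((\<lambda>x. s x * K x) has_vector_derivative S x * K x + s x * Ks x * S x) (at x within {-1..u})"
      using deriv_sub sub1(1) by (simp add: algebra_simps)
  qed
  have I1eq: "I1 = s u * K u - J1"
  proof -
    have "((\<lambda>x. S x * K x) has_integral J1) {-1..u}" unfolding J1_def
      by (metis (no_types, lifting) ext has_integral_integrable_integral integrable_on_subinterval intKS mult.commute sub1(1))
    from has_integral_diff[OF ibp1 this] show ?thesis unfolding I1_def s_m1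
      by (simp add: integral_unique)
  qed
  have ibp2: "((\<lambda>x. - (S x * K x) + (L - s x) * Ks x * S x) has_integral ((L - s 1) * K 1 - (L - s u) * K u)) {u..1}"
  proof (rule fundamental_theorem_of_calculus[OF u1(2)])
    fix x assume x: "x \<in> {u..1}"
    then have x1: "x \<in> {-1..1}" using u1 by auto
    have "((\<lambda>x. (L - s x) * K x) has_real_derivative (- (S x * K x) + (L - s x) * (Ks x * S x))) (at x within {-1..1})"
      by (rule derivative_eq_intros sd[OF x1] Kd[OF x1] refl)+ (simp add: algebra_simps)
    then show "((\<lambda>x. (L - s x) * K x) has_vector_derivative - (S x * K x) + (L - s x) * Ks x * S x) (at x within {u..1})"
      using deriv_sub sub1(2) by (simp add: algebra_simps)
  qed
  have I2eq: "I2 = - (L - s u) * K u + J2"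
  proof -
    have "((\<lambda>x. S x * K x) has_integral J2) {u..1}" unfolding J2_def
      by (metis (no_types, lifting) ext has_integral_integrable_integral integrable_on_subinterval intKS mult.commute sub1(2))
    from has_integral_add[OF ibp2 this] show ?thesis unfolding I2_def s_1
      by (simp add: integral_unique algebra_simps)
  qed
  have main_id: "I1 - I2 = L * K u - P" using I1eq I2eq JJ by (simp add: algebra_simps)
  have X1: "integral {-1..u} (\<lambda>x. (s x)^2 * S x) = (s u)^3 / 3"
  proof -
    have "((\<lambda>x. (s x)^2 * S x) has_integral ((s u)^3/3 - (s (-1))^3/3)) {-1..u}"
    proof (rule fundamental_theorem_of_calculus[OF u1(1)])
      fix x assume x: "x \<in> {-1..u}"
      then have x1: "x \<in> {-1..1}" using u1 by auto
      have "((\<lambda>x. (s x)^3/3) has_real_derivative ((s x)^2 * S x)) (at x within {-1..1})"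
        using sd[OF x1] by (auto intro!: derivative_eq_intros simp: numeral_3_eq_3 power2_eq_square field_simps)
      then show "((\<lambda>x. (s x)^3/3) has_vector_derivative (s x)^2 * S x) (at x within {-1..u})"
        using deriv_sub sub1(1) by simp
    qed
    then show ?thesis using s_m1 by (simp add: integral_unique)
  qed
  have X2: "integral {u..1} (\<lambda>x. (L - s x)^2 * S x) = (L - s u)^3 / 3"
  proof -
    have "((\<lambda>x. (L - s x)^2 * S x) has_integral ((\<lambda>x. -((L - s x)^3/3)) 1 - (\<lambda>x. -((L - s x)^3/3)) u)) {u..1}"
    proof (rule fundamental_theorem_of_calculus[OF u1(2)])
      fix x assume x: "x \<in> {u..1}"
      then have x1: "x \<in> {-1..1}" using u1 by auto
      have "((\<lambda>x. -((L - s x)^3/3)) has_real_derivative ((L - s x)^2 * S x)) (at x within {-1..1})"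
        using sd[OF x1] by (auto intro!: derivative_eq_intros simp: numeral_3_eq_3 power2_eq_square field_simps)
      then show "((\<lambda>x. -((L - s x)^3/3)) has_vector_derivative (L - s x)^2 * S x) (at x within {u..1})"
        using deriv_sub sub1(2) by simp
    qed
    then show ?thesis using s_1 by (simp add: integral_unique)
  qed
  have CS1: "I1^2 \<le> (s u)^3 / 3 * A1"
    using cs_w[of "-1" u s Ks S] cont_sub[OF sc sub1(1)] cont_sub[OF Ksc sub1(1)] cont_sub[OF Sc sub1(1)] S0 u1
    unfolding I1_def A1_def X1[symmetric] by auto
  have cLs: "continuous_on {u..1} (\<lambda>x. L - s x)"
    by (intro continuous_intros cont_sub[OF sc sub1(2)])
  have CS2: "I2^2 \<le> (L - s u)^3 / 3 * A2"
    using cLs cs_w[of u 1 "\<lambda>x. L - s x" Ks S] cont_sub[OF sc sub1(2)] cont_sub[OF Ksc sub1(2)] cont_sub[OF Sc sub1(2)] S0 u1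
    unfolding I2_def A2_def X2[symmetric] by (auto intro!: continuous_intros)
  have Lsu: "0 \<le> L - s u" using su_split su1 by simp
  have comb: "(I1 - I2)^2 \<le> ((s u)^3/3 + (L - s u)^3/3) * (A1 + A2)"
    by (rule alg_cs2[OF CS1 CS2]) (use su0 Lsu A10 A20 in auto)
  have cub: "(s u)^3/3 + (L - s u)^3/3 \<le> L^3/3"
  proof -
    have "(s u)^3/3 + (L - s u)^3/3 = L^3/3 - L * (s u) * (L - s u)"
      by (rule cube_id)
    moreover have "L * (s u) * (L - s u) \<ge> 0" by (intro mult_nonneg_nonneg) (use su0 Lsu Lp in auto)
    ultimately show ?thesis by linarith
  qed
  have A0: "A \<ge> 0" using AA A10 A20 by linarith
  have "(L * K u - P)^2 \<le> ((s u)^3/3 + (L - s u)^3/3) * A"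
    using comb unfolding main_id AA .
  also have "\<dots> \<le> L^3/3 * A" using cub A0 by (rule mult_right_mono)
  also have "\<dots> = L^2 * (L/3 * A)" by (simp add: power3_eq_cube power2_eq_square)
  finally have 1: "(L * K u - P)^2 \<le> L^2 * (L/3 * A)" .
  have 2: "(L * K u - P)^2 = L^2 * (K u - P/L)^2"
    using Lp by (simp add: field_simps power2_eq_square)
  have "L^2 * (K u - P/L)^2 \<le> L^2 * (L/3 * A)" using 1 unfolding 2 .
  then have "(K u - P/L)^2 \<le> L/3 * A" by (rule mult_left_le_imp_le) (use Lp in simp)
  then show ?thesis unfolding L_def P_def A_def .
qed




lemma static_bounds:
  fixes S K Ks :: "real \<Rightarrow> real"
  assumes Sc: "continuous_on {-1..1} S" and S0: "\<And>x. x \<in> {-1..1} \<Longrightarrow> 0 \<le> S x"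
    and Kd: "\<And>x. x \<in> {-1..1} \<Longrightarrow> (K has_real_derivative (Ks x * S x)) (at x within {-1..1})"
    and Ksc: "continuous_on {-1..1} Ks"
    and Ppos: "integral {-1..1} (\<lambda>x. K x * S x) > 0"
  defines "L \<equiv> integral {-1..1} S"
    and "P \<equiv> integral {-1..1} (\<lambda>x. K x * S x)"
    and "A \<equiv> integral {-1..1} (\<lambda>x. (Ks x)^2 * S x)"
    and "B \<equiv> integral {-1..1} (\<lambda>x. (K x)^4 * S x)"
    and "C \<equiv> integral {-1..1} (\<lambda>x. (K x)^2 * S x)"
  shows "- (L * A) / P^2 \<le> (- A + 1/2 * B) / C \<and> (- A + 1/2 * B) / C \<le> 2 * L / pi * A + (P / L)^2"
proof -
  have Kc: "continuous_on {-1..1} K"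
    by (rule continuous_on_eq_continuous_within[THEN iffD2]) (use Kd DERIV_continuous in blast)
  have P0: "P > 0" using Ppos P_def by simp
  have iS: "S integrable_on {-1..1}" by (rule integrable_continuous_interval[OF Sc])
  have iC: "(\<lambda>x. (K x)^2 * S x) integrable_on {-1..1}"
    by (intro integrable_continuous_interval continuous_intros Kc Sc)
  have iB: "(\<lambda>x. (K x)^4 * S x) integrable_on {-1..1}"
    by (intro integrable_continuous_interval continuous_intros Kc Sc)
  have iA: "(\<lambda>x. (Ks x)^2 * S x) integrable_on {-1..1}"
    by (intro integrable_continuous_interval continuous_intros Ksc Sc)
  have L0: "L \<ge> 0" unfolding L_def by (rule integral_nonneg[OF iS]) (use S0 in auto)
  have C0: "C \<ge> 0" unfolding C_def by (rule integral_nonneg[OF iC]) (use S0 in auto)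
  have A0: "A \<ge> 0" unfolding A_def by (rule integral_nonneg[OF iA]) (use S0 in auto)
  have B0: "B \<ge> 0" unfolding B_def by (rule integral_nonneg[OF iB]) (use S0 in auto)
  have cs: "P^2 \<le> C * L"
  proof -
    have "(integral {-1..1} (\<lambda>x. K x * (\<lambda>_. 1::real) x * S x))^2
       \<le> integral {-1..1} (\<lambda>x. (K x)^2 * S x) * integral {-1..1} (\<lambda>x. ((\<lambda>_. 1::real) x)^2 * S x)"
      by (rule cs_w[OF Kc _ Sc S0]) (auto intro: continuous_intros)
    then show ?thesis by (simp add: P_def C_def L_def)
  qed
  have P2: "P^2 > 0" using P0 by simp
  have Cp: "C > 0"
  proof (rule ccontr)
    assume "\<not> C > 0" then have "C = 0" using C0 by simp
    then show False using cs P2 by simp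
  qed
  have Lp: "L > 0"
  proof (rule ccontr)
    assume "\<not> L > 0" then have "L = 0" using L0 by simp
    then show False using cs P2 by simp
  qed
  have lower: "- (L * A) / P^2 \<le> (- A + 1/2 * B) / C"
  proof -
    have "- (L * A) / P^2 \<le> - A / C"
    proof -
      have "A * P^2 \<le> A * (C * L)" using cs A0 by (rule mult_left_mono)
      then have "A / C \<le> (L * A) / P^2" using Cp P2 by (simp add: field_simps)
      then show ?thesis by simp
    qed
    also have "\<dots> \<le> (- A + 1/2 * B) / C" using Cp B0 by (intro divide_right_mono) auto
    finally show ?thesis .
  qed
  define Q where "Q = 2 * (P/L)^2 + 2 * (L/3 * A)"
  have pt: "(K x)^2 \<le> Q" if x: "x \<in> {-1..1}" for x
  proof -
    have g: "(K x - P/L)^2 \<le> L/3 * A"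
      using green_bound[OF Sc S0 Kd Ksc _ x] Lp unfolding L_def P_def A_def by blast
    have "(K x)^2 \<le> 2 * (P/L)^2 + 2 * (K x - P/L)^2"
    proof -
      have "0 \<le> (K x - 2 * (P/L))^2" by simp
      then show ?thesis by (simp add: power2_eq_square algebra_simps)
    qed
    then show ?thesis unfolding Q_def using g by linarith
  qed
  have BQ: "B \<le> Q * C"
  proof -
    have "integral {-1..1} (\<lambda>x. (K x)^4 * S x) \<le> integral {-1..1} (\<lambda>x. Q * ((K x)^2 * S x))"
    proof (rule integral_le[OF iB])
      show "(\<lambda>x. Q * ((K x)^2 * S x)) integrable_on {-1..1}" by (intro integrable_continuous_interval continuous_intros Kc Sc)
    next
      fix x :: real assume x: "x \<in> {-1..1}"
      have "(K x)^4 * S x = (K x)^2 * ((K x)^2 * S x)" by (simp add: power2_eq_square power4_eq_xxxx)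
      also have "\<dots> \<le> Q * ((K x)^2 * S x)" by (rule mult_right_mono[OF pt[OF x]]) (use S0 x in simp)
      finally show "(K x)^4 * S x \<le> Q * ((K x)^2 * S x)" .
    qed
    then show ?thesis unfolding B_def C_def by simp
  qed
  have upper: "(- A + 1/2 * B) / C \<le> 2 * L / pi * A + (P / L)^2"
  proof -
    have "(- A + 1/2 * B) / C \<le> (1/2 * B) / C" using Cp A0 by (intro divide_right_mono) auto
    also have "\<dots> \<le> (1/2 * (Q * C)) / C" using Cp BQ by (intro divide_right_mono) auto
    also have "\<dots> = (P/L)^2 + L/3 * A" using Cp by (simp add: Q_def)
    also have "\<dots> \<le> (P/L)^2 + 2 * L / pi * A"
    proof -
      have "1/3 \<le> 2 / pi" using pi_less_4 pi_gt_zero by (simp add: field_simps)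
      then have "L * A * (1/3) \<le> L * A * (2 / pi)" using Lp A0 by (intro mult_left_mono) auto
      then show ?thesis by simp
    qed
    finally show ?thesis by simp
  qed
  show ?thesis using lower upper by blast
qed

lemma ibp_len:
  fixes S K Ks D :: "real \<Rightarrow> real"
  assumes Sc: "continuous_on {-1..1} S"
    and Kd: "\<And>x. x \<in> {-1..1} \<Longrightarrow> (K has_real_derivative (Ks x * S x)) (at x within {-1..1})"
    and Ksc: "continuous_on {-1..1} Ks"
    and Ksd: "\<And>x. x \<in> {-1..1} \<Longrightarrow> (Ks has_real_derivative D x) (at x within {-1..1})"
    and b1: "Ks (-1) = 0" and b2: "Ks 1 = 0"
  shows "((\<lambda>x. K x * D x) has_integral - integral {-1..1} (\<lambda>x. (Ks x)^2 * S x)) {-1..1}"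
proof -
  have Kc: "continuous_on {-1..1} K"
    by (rule continuous_on_eq_continuous_within[THEN iffD2]) (use Kd DERIV_continuous in blast)
  have f: "((\<lambda>x. (Ks x)^2 * S x + K x * D x) has_integral (K 1 * Ks 1 - K (-1) * Ks (-1))) {-1..1}"
  proof (rule fundamental_theorem_of_calculus)
    fix x :: real assume x: "x \<in> {-1..1}"
    have "((\<lambda>x. K x * Ks x) has_real_derivative (Ks x * S x * Ks x + K x * D x)) (at x within {-1..1})"
      using DERIV_mult[OF Kd[OF x] Ksd[OF x]] by (simp add: algebra_simps)
    then show "((\<lambda>x. K x * Ks x) has_vector_derivative (Ks x)^2 * S x + K x * D x) (at x within {-1..1})"
      unfolding has_real_derivative_iff_has_vector_derivative[symmetric]
      by (simp add: power2_eq_square algebra_simps)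
  qed simp
  have iA: "((\<lambda>x. (Ks x)^2 * S x) has_integral integral {-1..1} (\<lambda>x. (Ks x)^2 * S x)) {-1..1}"
    by (intro integrable_integral integrable_continuous_interval continuous_intros Ksc Sc)
  from has_integral_diff[OF f iA] show ?thesis using b1 b2 by simp
qed




lemma sm_open: "smooth_on U f \<Longrightarrow> open U"
  by (simp add: smooth_on_def)

lemma sm_cont: "smooth_on U f \<Longrightarrow> continuous_on U (pderivs bs f)"
  by (simp add: smooth_on_def)

lemma sm_d1:
  assumes "smooth_on U f" "(u, t) \<in> U"
  shows "((\<lambda>v. pderivs bs f (v, t)) has_vector_derivative pderivs (True # bs) f (u, t)) (at u)"
proof -
  have "(\<lambda>v. pderivs bs f (v, t)) differentiable (at u)"
    using assms unfolding smooth_on_def by (metis fst_conv snd_conv)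
  then show ?thesis by (simp add: pD1_def vector_derivative_works[symmetric])
qed

lemma sm_d2:
  assumes "smooth_on U f" "(u, t) \<in> U"
  shows "((\<lambda>s. pderivs bs f (u, s)) has_vector_derivative pderivs (False # bs) f (u, t)) (at t)"
proof -
  have "(\<lambda>s. pderivs bs f (u, s)) differentiable (at t)"
    using assms unfolding smooth_on_def by (metis fst_conv snd_conv)
  then show ?thesis by (simp add: pD2_def vector_derivative_works[symmetric])
qed

lemma norm_vd:
  fixes f :: "real \<Rightarrow> 'a::real_inner"
  assumes "(f has_vector_derivative f') (at x within s)" "f x \<noteq> 0"
  shows "((\<lambda>v. norm (f v)) has_real_derivative (f x \<bullet> f') / norm (f x)) (at x within s)"
proof -
  have "((\<lambda>v. norm (f v)) has_derivative (\<lambda>h. (h *\<^sub>R f') \<bullet> sgn (f x))) (at x within s)"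
    using has_derivative_compose[OF assms(1)[unfolded has_vector_derivative_def] has_derivative_norm[OF assms(2)]] .
  moreover have "(\<lambda>h. (h *\<^sub>R f') \<bullet> sgn (f x)) = (*) ((f x \<bullet> f') / norm (f x))"
    by (rule ext) (simp add: sgn_div_norm inner_commute divide_inverse mult_ac)
  ultimately show ?thesis by (simp add: has_field_derivative_def)
qed

lemma inner_vd:
  fixes f g :: "real \<Rightarrow> 'a::real_inner"
  assumes "(f has_vector_derivative f') (at x within s)" "(g has_vector_derivative g') (at x within s)"
  shows "((\<lambda>v. f v \<bullet> g v) has_real_derivative (f x \<bullet> g' + f' \<bullet> g x)) (at x within s)"
proof -
  have "((\<lambda>v. f v \<bullet> g v) has_derivative (\<lambda>h. f x \<bullet> (h *\<^sub>R g') + (h *\<^sub>R f') \<bullet> g x)) (at x within s)"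
    using has_derivative_inner[OF assms(1)[unfolded has_vector_derivative_def] assms(2)[unfolded has_vector_derivative_def]] .
  moreover have "(\<lambda>h. f x \<bullet> (h *\<^sub>R g') + (h *\<^sub>R f') \<bullet> g x) = (*) (f x \<bullet> g' + f' \<bullet> g x)"
    by (rule ext) (simp add: algebra_simps)
  ultimately show ?thesis by (simp add: has_field_derivative_def)
qed

definition Kf :: "complex \<Rightarrow> complex \<Rightarrow> real" where
  "Kf z w = (Re w * Im z - Re z * Im w) / (cmod z)^3"

definition Ksf :: "complex \<Rightarrow> complex \<Rightarrow> complex \<Rightarrow> real" where
  "Ksf z w y = (Re y * Im z - Re z * Im y) / (cmod z)^4
      - 3 * (Re w * Im z - Re z * Im w) * (z \<bullet> w) / (cmod z)^6"

lemma tangent_eq: "tangent \<alpha> p = (1 / cmod (pD1 \<alpha> p)) *\<^sub>R pD1 \<alpha> p"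
  by (simp add: tangent_def sdiff_def)

lemma tangent_vd:
  assumes sm: "smooth_on U \<alpha>" and p: "(u, t) \<in> U" and nz: "pD1 \<alpha> (u, t) \<noteq> 0"
  shows "((\<lambda>v. tangent \<alpha> (v, t)) has_vector_derivative
     ((1 / cmod (pD1 \<alpha> (u,t))) *\<^sub>R pderivs [True, True] \<alpha> (u,t)
      - ((pD1 \<alpha> (u,t) \<bullet> pderivs [True, True] \<alpha> (u,t)) / (cmod (pD1 \<alpha> (u,t)))^3) *\<^sub>R pD1 \<alpha> (u,t))) (at u)"
proof -
  define a1 where "a1 = (\<lambda>v. pD1 \<alpha> (v, t))"
  define a2 where "a2 = pderivs [True, True] \<alpha> (u, t)"
  have d1: "(a1 has_vector_derivative a2) (at u)"
    using sm_d1[OF sm p, of "[True]"] by (simp add: a1_def a2_def)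
  have nz': "a1 u \<noteq> 0" using nz a1_def by simp
  have dn: "((\<lambda>v. norm (a1 v)) has_real_derivative (a1 u \<bullet> a2) / norm (a1 u)) (at u)"
    by (rule norm_vd[OF d1 nz'])
  have dinv: "((\<lambda>v. 1 / norm (a1 v)) has_real_derivative - ((a1 u \<bullet> a2) / (norm (a1 u))^3)) (at u)"
    using nz' by (auto intro!: derivative_eq_intros dn simp: power2_eq_square power3_eq_cube)
  have "((\<lambda>v. (1 / norm (a1 v)) *\<^sub>R a1 v) has_vector_derivative
      ((1 / norm (a1 u)) *\<^sub>R a2 + (- ((a1 u \<bullet> a2) / (norm (a1 u))^3)) *\<^sub>R a1 u)) (at u)"
    by (rule has_vector_derivative_scaleR[OF dinv d1])
  then show ?thesis by (simp add: tangent_eq a1_def a2_def algebra_simps)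
qed

lemma curv_formula:
  assumes sm: "smooth_on U \<alpha>" and p: "(u, t) \<in> U" and nz: "pD1 \<alpha> (u, t) \<noteq> 0"
  shows "curv \<alpha> (u, t) = Kf (pD1 \<alpha> (u,t)) (pderivs [True, True] \<alpha> (u,t))"
proof -
  define z where "z = pD1 \<alpha> (u,t)"
  define w where "w = pderivs [True, True] \<alpha> (u,t)"
  have T: "pD1 (tangent \<alpha>) (u, t) = (1 / cmod z) *\<^sub>R w - ((z \<bullet> w) / (cmod z)^3) *\<^sub>R z"
    using vector_derivative_at[OF tangent_vd[OF sm p nz]] by (simp add: pD1_def z_def w_def)
  have zn: "z \<noteq> 0" using nz z_def by simp
  have cz: "cmod z > 0" using zn by simp
  have c1: "curv \<alpha> (u, t) = - (sdiff \<alpha> (tangent \<alpha>) (u, t) \<bullet> (\<i> * tangent \<alpha> (u, t)))"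
    unfolding curv_def normal_def tangent_def[symmetric] ..
  have "curv \<alpha> (u, t) = - (((1 / cmod z) *\<^sub>R ((1 / cmod z) *\<^sub>R w - ((z \<bullet> w) / (cmod z)^3) *\<^sub>R z))
       \<bullet> (\<i> * ((1 / cmod z) *\<^sub>R z)))"
    unfolding c1 sdiff_def T tangent_eq z_def by simp
  also have "\<dots> = (Re w * Im z - Re z * Im w) / (cmod z)^3"
    using cz by (simp add: inner_complex_def power3_eq_cube field_simps)
  finally show ?thesis by (simp add: Kf_def z_def w_def)
qed




lemma sm_cont1: "smooth_on U \<alpha> \<Longrightarrow> continuous_on U (pD1 \<alpha>)"
  using sm_cont[of U \<alpha> "[True]"] by simp
lemma sm_cont2: "smooth_on U \<alpha> \<Longrightarrow> continuous_on U (pD1 (pD1 \<alpha>))"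
  using sm_cont[of U \<alpha> "[True,True]"] by simp
lemma sm_cont3: "smooth_on U \<alpha> \<Longrightarrow> continuous_on U (pD1 (pD1 (pD1 \<alpha>)))"
  using sm_cont[of U \<alpha> "[True,True,True]"] by simp

lemma sm_da1: "smooth_on U \<alpha> \<Longrightarrow> (u, t) \<in> U \<Longrightarrow>
   ((\<lambda>v. pD1 \<alpha> (v, t)) has_vector_derivative pD1 (pD1 \<alpha>) (u, t)) (at u)"
  using sm_d1[of U \<alpha> u t "[True]"] by simp
lemma sm_da2: "smooth_on U \<alpha> \<Longrightarrow> (u, t) \<in> U \<Longrightarrow>
   ((\<lambda>v. pD1 (pD1 \<alpha>) (v, t)) has_vector_derivative pD1 (pD1 (pD1 \<alpha>)) (u, t)) (at u)"
  using sm_d1[of U \<alpha> u t "[True,True]"] by simp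
lemma sm_da3: "smooth_on U \<alpha> \<Longrightarrow> (u, t) \<in> U \<Longrightarrow>
   ((\<lambda>v. pD1 (pD1 (pD1 \<alpha>)) (v, t)) has_vector_derivative pD1 (pD1 (pD1 (pD1 \<alpha>))) (u, t)) (at u)"
  using sm_d1[of U \<alpha> u t "[True,True,True]"] by simp

lemma cont_slice:
  assumes "continuous_on U f" "\<And>v. v \<in> V \<Longrightarrow> (v, t) \<in> U"
  shows "continuous_on V (\<lambda>v. f (v, t))"
  by (rule continuous_on_compose2[OF assms(1)]) (use assms(2) in \<open>auto intro!: continuous_intros\<close>)

lemma open_W:
  assumes sm: "smooth_on U \<alpha>"
  shows "open {v. (v, t) \<in> U \<and> pD1 \<alpha> (v, t) \<noteq> 0}"
proof -
  have oU: "open U" using sm by (rule sm_open)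
  have "open (pD1 \<alpha> -` (- {0}) \<inter> U)"
    using sm_cont1[OF sm] oU by (auto simp: continuous_on_open_vimage)
  moreover have "continuous_on UNIV (\<lambda>v::real. (v, t))" by (intro continuous_intros)
  ultimately have "open ((\<lambda>v. (v, t)) -` (pD1 \<alpha> -` (- {0}) \<inter> U) \<inter> UNIV)"
    by (auto simp: continuous_on_open_vimage)
  moreover have "(\<lambda>v. (v, t)) -` (pD1 \<alpha> -` (- {0}) \<inter> U) \<inter> UNIV = {v. (v, t) \<in> U \<and> pD1 \<alpha> (v, t) \<noteq> 0}"
    by auto
  ultimately show ?thesis by simp
qed

lemma Kf_deriv:
  assumes sm: "smooth_on U \<alpha>" and p: "(u, t) \<in> U" and nz: "pD1 \<alpha> (u, t) \<noteq> 0"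
  shows "((\<lambda>v. Kf (pD1 \<alpha> (v, t)) (pD1 (pD1 \<alpha>) (v, t))) has_real_derivative
     Ksf (pD1 \<alpha> (u, t)) (pD1 (pD1 \<alpha>) (u, t)) (pD1 (pD1 (pD1 \<alpha>)) (u, t)) * cmod (pD1 \<alpha> (u, t))) (at u)"
proof -
  note d1 = sm_da1[OF sm p] and d2 = sm_da2[OF sm p]
  have dn: "((\<lambda>v. cmod (pD1 \<alpha> (v, t))) has_real_derivative (pD1 \<alpha> (u, t) \<bullet> pD1 (pD1 \<alpha>) (u, t)) / cmod (pD1 \<alpha> (u, t))) (at u)"
    using norm_vd[OF d1] nz by simp
  note r1 = has_field_derivative_Re[OF d1] and i1 = has_field_derivative_Im[OF d1]
  note r2 = has_field_derivative_Re[OF d2] and i2 = has_field_derivative_Im[OF d2]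
  have cz: "cmod (pD1 \<alpha> (u, t)) > 0" using nz by simp
  show ?thesis
    unfolding Kf_def
    apply (rule DERIV_cong)
     apply (rule r1 i1 r2 i2 dn derivative_intros)+
    using cz apply simp
    using cz by (simp add: Ksf_def field_simps eval_nat_numeral)
qed




lemma curv_deriv:
  assumes sm: "smooth_on U \<alpha>" and p: "(u, t) \<in> U" and nz: "pD1 \<alpha> (u, t) \<noteq> 0"
  shows "((\<lambda>v. curv \<alpha> (v, t)) has_real_derivative
     Ksf (pD1 \<alpha> (u, t)) (pD1 (pD1 \<alpha>) (u, t)) (pD1 (pD1 (pD1 \<alpha>)) (u, t)) * cmod (pD1 \<alpha> (u, t))) (at u)"
  by (rule has_field_derivative_transform_within_open[OF Kf_deriv[OF sm p nz] open_W[OF sm, of t]])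
     (use p nz curv_formula[OF sm] in auto)

lemma Ks_formula:
  assumes sm: "smooth_on U \<alpha>" and p: "(u, t) \<in> U" and nz: "pD1 \<alpha> (u, t) \<noteq> 0"
  shows "sdiff \<alpha> (curv \<alpha>) (u, t) = Ksf (pD1 \<alpha> (u, t)) (pD1 (pD1 \<alpha>) (u, t)) (pD1 (pD1 (pD1 \<alpha>)) (u, t))"
proof -
  have "pD1 (curv \<alpha>) (u, t) = Ksf (pD1 \<alpha> (u, t)) (pD1 (pD1 \<alpha>) (u, t)) (pD1 (pD1 (pD1 \<alpha>)) (u, t)) * cmod (pD1 \<alpha> (u, t))"
    using vector_derivative_at[OF curv_deriv[OF sm p nz, unfolded has_real_derivative_iff_has_vector_derivative]]
    by (simp add: pD1_def)
  then show ?thesis using nz by (simp add: sdiff_def)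
qed

lemma Ksf_diff:
  assumes sm: "smooth_on U \<alpha>" and p: "(u, t) \<in> U" and nz: "pD1 \<alpha> (u, t) \<noteq> 0"
  shows "\<exists>D. ((\<lambda>v. Ksf (pD1 \<alpha> (v, t)) (pD1 (pD1 \<alpha>) (v, t)) (pD1 (pD1 (pD1 \<alpha>)) (v, t))) has_real_derivative D) (at u)"
proof -
  note d1 = sm_da1[OF sm p] and d2 = sm_da2[OF sm p] and d3 = sm_da3[OF sm p]
  have dn: "((\<lambda>v. cmod (pD1 \<alpha> (v, t))) has_real_derivative (pD1 \<alpha> (u, t) \<bullet> pD1 (pD1 \<alpha>) (u, t)) / cmod (pD1 \<alpha> (u, t))) (at u)"
    using norm_vd[OF d1] nz by simp
  note r1 = has_field_derivative_Re[OF d1] and i1 = has_field_derivative_Im[OF d1]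
  note r2 = has_field_derivative_Re[OF d2] and i2 = has_field_derivative_Im[OF d2]
  note r3 = has_field_derivative_Re[OF d3] and i3 = has_field_derivative_Im[OF d3]
  have cz: "cmod (pD1 \<alpha> (u, t)) \<noteq> 0" using nz by simp
  show ?thesis
    unfolding Ksf_def inner_complex_def
    apply (rule exI)
    apply (rule r1 i1 r2 i2 r3 i3 dn derivative_intros | simp add: nz)+
    done
qed

lemma Ks_deriv:
  assumes sm: "smooth_on U \<alpha>" and p: "(u, t) \<in> U" and nz: "pD1 \<alpha> (u, t) \<noteq> 0"
  shows "((\<lambda>v. sdiff \<alpha> (curv \<alpha>) (v, t)) has_real_derivative pD1 (sdiff \<alpha> (curv \<alpha>)) (u, t)) (at u)"
proof -
  obtain D where D: "((\<lambda>v. Ksf (pD1 \<alpha> (v, t)) (pD1 (pD1 \<alpha>) (v, t)) (pD1 (pD1 (pD1 \<alpha>)) (v, t))) has_real_derivative D) (at u)"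
    using Ksf_diff[OF sm p nz] by blast
  have D2: "((\<lambda>v. sdiff \<alpha> (curv \<alpha>) (v, t)) has_real_derivative D) (at u)"
    by (rule has_field_derivative_transform_within_open[OF D open_W[OF sm, of t]])
       (use p nz Ks_formula[OF sm] in auto)
  moreover have "pD1 (sdiff \<alpha> (curv \<alpha>)) (u, t) = D"
    using vector_derivative_at[OF D2[unfolded has_real_derivative_iff_has_vector_derivative]]
    by (simp add: pD1_def)
  ultimately show ?thesis by simp
qed

lemma cont_S:
  assumes sm: "smooth_on U \<alpha>" and V: "\<And>v. v \<in> V \<Longrightarrow> (v, t) \<in> U"
  shows "continuous_on V (\<lambda>v. cmod (pD1 \<alpha> (v, t)))"
  using cont_slice[OF sm_cont1[OF sm] V] by (intro continuous_intros)

lemma cont_Ks: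
  assumes sm: "smooth_on U \<alpha>" and V: "\<And>v. v \<in> V \<Longrightarrow> (v, t) \<in> U" and nz: "\<And>v. v \<in> V \<Longrightarrow> pD1 \<alpha> (v, t) \<noteq> 0"
  shows "continuous_on V (\<lambda>v. sdiff \<alpha> (curv \<alpha>) (v, t))"
proof -
  have c1: "continuous_on V (\<lambda>v. pD1 \<alpha> (v, t))" by (rule cont_slice[OF sm_cont1[OF sm] V])
  have c2: "continuous_on V (\<lambda>v. pD1 (pD1 \<alpha>) (v, t))" by (rule cont_slice[OF sm_cont2[OF sm] V])
  have c3: "continuous_on V (\<lambda>v. pD1 (pD1 (pD1 \<alpha>)) (v, t))" by (rule cont_slice[OF sm_cont3[OF sm] V])
  have "continuous_on V (\<lambda>v. Ksf (pD1 \<alpha> (v, t)) (pD1 (pD1 \<alpha>) (v, t)) (pD1 (pD1 (pD1 \<alpha>)) (v, t)))"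
    unfolding Ksf_def inner_complex_def
    by (intro continuous_intros c1 c2 c3) (use nz in auto)
  then show ?thesis
    by (rule continuous_on_eq) (use V nz Ks_formula[OF sm] in auto)
qed




lemma box_in_U:
  fixes u0 t0 :: real and U :: "(real \<times> real) set"
  assumes oU: "open U" and p: "(u0, t0) \<in> U"
  obtains d where "d > 0" "{u0-d..u0+d} \<times> {t0-d..t0+d} \<subseteq> U"
proof -
  obtain e where e: "e > 0" "ball (u0, t0) e \<subseteq> U" using oU p open_contains_ball by blast
  define d where "d = e / 3"
  have "{u0-d..u0+d} \<times> {t0-d..t0+d} \<subseteq> ball (u0, t0) e"
  proof
    fix q assume q: "q \<in> {u0-d..u0+d} \<times> {t0-d..t0+d}"
    obtain x y where xy: "q = (x, y)" by (cases q)
    have "dist (u0, t0) (x, y) = sqrt ((dist u0 x)^2 + (dist t0 y)^2)" by (simp add: dist_Pair_Pair)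
    also have "\<dots> \<le> \<bar>dist u0 x\<bar> + \<bar>dist t0 y\<bar>" by (rule sqrt_sum_squares_le_sum_abs)
    also have "\<dots> \<le> d + d" using q xy by (auto simp: dist_real_def)
    also have "\<dots> < e" using e d_def by simp
    finally show "q \<in> ball (u0, t0) e" using xy by simp
  qed
  then show ?thesis using that[of d] e d_def by auto
qed

lemma schwarz:
  fixes f :: "real \<times> real \<Rightarrow> complex"
  assumes sm: "smooth_on U f" and p: "(u0, t0) \<in> U"
  shows "pD2 (pD1 f) (u0, t0) = pD1 (pD2 f) (u0, t0)"
proof -
  obtain d where d: "d > 0" and box: "{u0-d..u0+d} \<times> {t0-d..t0+d} \<subseteq> U"
    using box_in_U[OF sm_open[OF sm] p] by blast
  define Iu where "Iu = {u0-d..u0+d}"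
  define It where "It = {t0-d..t0+d}"
  have inU: "(x, s) \<in> U" if "x \<in> Iu" "s \<in> It" for x s using box that Iu_def It_def by auto
  have dA: "((\<lambda>s. f (v, s)) has_vector_derivative pD2 f (v, s)) (at s)" if "(v, s) \<in> U" for v s
    using sm_d2[OF sm that, of "[]"] by simp
  have dB: "((\<lambda>x. pD2 f (x, s)) has_vector_derivative pD1 (pD2 f) (x, s)) (at x)" if "(x, s) \<in> U" for x s
    using sm_d1[OF sm that, of "[False]"] by simp
  have df: "((\<lambda>x. f (x, s)) has_vector_derivative pD1 f (x, s)) (at x)" if "(x, s) \<in> U" for x s
    using sm_d1[OF sm that, of "[]"] by simp
  have cA: "continuous_on U (pD2 f)" using sm_cont[OF sm, of "[False]"] by simp
  have cB: "continuous_on U (pD1 (pD2 f))" using sm_cont[OF sm, of "[True, False]"] by simp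
  have u0I: "u0 \<in> interior Iu" and t0I: "t0 \<in> interior It" using d by (auto simp: Iu_def It_def)
  have iIu: "y \<in> Iu" if "y \<in> interior Iu" for y using interior_subset that by blast
  have iIt: "y \<in> It" if "y \<in> interior It" for y using interior_subset that by blast
  have step2: "pD1 f (u0, t) = pD1 f (u0, t0 - d) + integral {t0-d..t} (\<lambda>s. pD1 (pD2 f) (u0, s))"
    if t: "t \<in> It" for t
  proof -
    have tt: "t0 - d \<le> t" "t \<le> t0 + d" using t It_def by auto
    have sub: "{t0-d..t} \<subseteq> It" using tt It_def by auto
    have ftc: "f (v, t) = f (v, t0 - d) + integral {t0-d..t} (\<lambda>s. pD2 f (v, s))" if v: "v \<in> Iu" for v
    proof -
      have "((\<lambda>s. pD2 f (v, s)) has_integral (f (v, t) - f (v, t0 - d))) {t0-d..t}"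
      proof (rule fundamental_theorem_of_calculus[OF tt(1)])
        fix s assume "s \<in> {t0-d..t}"
        then have "(v, s) \<in> U" using inU[OF v] sub by auto
        then show "((\<lambda>s. f (v, s)) has_vector_derivative pD2 f (v, s)) (at s within {t0-d..t})"
          using dA has_vector_derivative_at_within by blast
      qed
      then show ?thesis by (simp add: integral_unique)
    qed
    have leib: "((\<lambda>x. integral (cbox (t0-d) t) (\<lambda>s. pD2 f (x, s))) has_vector_derivative
        integral (cbox (t0-d) t) (\<lambda>s. pD1 (pD2 f) (u0, s))) (at u0 within Iu)"
    proof (rule leibniz_rule_vector_derivative[where fx="\<lambda>x s. pD1 (pD2 f) (x, s)"])
      fix x s assume x: "x \<in> Iu" and s: "s \<in> cbox (t0-d) t"
      then have "(x, s) \<in> U" using inU sub by auto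
      then show "((\<lambda>x. pD2 f (x, s)) has_vector_derivative pD1 (pD2 f) (x, s)) (at x within Iu)"
        using dB has_vector_derivative_at_within by blast
    next
      fix x assume x: "x \<in> Iu"
      have "continuous_on (cbox (t0-d) t) (\<lambda>s. pD2 f (x, s))"
        by (rule continuous_on_compose2[OF cA]) (use x inU sub in \<open>auto intro!: continuous_intros\<close>)
      then show "(\<lambda>s. pD2 f (x, s)) integrable_on cbox (t0-d) t"
        by (rule integrable_continuous)
    next
      have "Iu \<times> cbox (t0-d) t \<subseteq> U" using inU sub by auto
      then have "continuous_on (Iu \<times> cbox (t0-d) t) (pD1 (pD2 f))" using cB continuous_on_subset by blast
      then show "continuous_on (Iu \<times> cbox (t0-d) t) (\<lambda>(x, s). pD1 (pD2 f) (x, s))" by (simp add: case_prod_beta)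
    next
      show "u0 \<in> Iu" using d Iu_def by simp
      show "convex Iu" by (simp add: Iu_def)
    qed
    have leib2: "((\<lambda>x. integral {t0-d..t} (\<lambda>s. pD2 f (x, s))) has_vector_derivative
        integral {t0-d..t} (\<lambda>s. pD1 (pD2 f) (u0, s))) (at u0)"
      using leib at_within_interior[OF u0I] by (simp add: cbox_interval)
    have u0t0: "(u0, t0 - d) \<in> U" using inU d by (simp add: Iu_def It_def)
    have sum: "((\<lambda>x. f (x, t0 - d) + integral {t0-d..t} (\<lambda>s. pD2 f (x, s))) has_vector_derivative
        pD1 f (u0, t0 - d) + integral {t0-d..t} (\<lambda>s. pD1 (pD2 f) (u0, s))) (at u0)"
      by (rule has_vector_derivative_add[OF df[OF u0t0] leib2])
    have "((\<lambda>x. f (x, t)) has_vector_derivative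
        pD1 f (u0, t0 - d) + integral {t0-d..t} (\<lambda>s. pD1 (pD2 f) (u0, s))) (at u0)"
      by (rule has_vector_derivative_transform_within_open[OF sum, of "interior Iu"])
         (use u0I ftc iIu in auto)
    then show ?thesis by (simp add: pD1_def vector_derivative_at)
  qed
  have cBu: "continuous_on It (\<lambda>s. pD1 (pD2 f) (u0, s))"
    by (rule continuous_on_compose2[OF cB]) (use inU d Iu_def in \<open>auto intro!: continuous_intros\<close>)
  have "((\<lambda>t. integral {t0-d..t} (\<lambda>s. pD1 (pD2 f) (u0, s))) has_vector_derivative pD1 (pD2 f) (u0, t0)) (at t0 within It)"
    using integral_has_vector_derivative[OF cBu[unfolded It_def]] d by (simp add: It_def)
  then have "((\<lambda>t. integral {t0-d..t} (\<lambda>s. pD1 (pD2 f) (u0, s))) has_vector_derivative pD1 (pD2 f) (u0, t0)) (at t0)"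
    using at_within_interior[OF t0I] by simp
  then have "((\<lambda>t. pD1 f (u0, t0 - d) + integral {t0-d..t} (\<lambda>s. pD1 (pD2 f) (u0, s))) has_vector_derivative pD1 (pD2 f) (u0, t0)) (at t0)"
    using has_vector_derivative_add[OF has_vector_derivative_const] by fastforce
  then have "((\<lambda>t. pD1 f (u0, t)) has_vector_derivative pD1 (pD2 f) (u0, t0)) (at t0)"
    by (rule has_vector_derivative_transform_within_open[of _ _ _ "interior It"])
       (use t0I step2 iIt in auto)
  then show ?thesis by (simp add: pD2_def vector_derivative_at)
qed




lemma C_pos:
  fixes S K :: "real \<Rightarrow> real"
  assumes Sc: "continuous_on {-1..1} S" and S0: "\<And>x. x \<in> {-1..1} \<Longrightarrow> 0 \<le> S x"
    and Kc: "continuous_on {-1..1} K"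
    and Ppos: "integral {-1..1} (\<lambda>x. K x * S x) > 0"
  shows "integral {-1..1} (\<lambda>x. (K x)^2 * S x) > 0"
proof -
  have "(integral {-1..1} (\<lambda>x. K x * (\<lambda>_. 1::real) x * S x))^2
       \<le> integral {-1..1} (\<lambda>x. (K x)^2 * S x) * integral {-1..1} (\<lambda>x. ((\<lambda>_. 1::real) x)^2 * S x)"
    by (rule cs_w[OF Kc _ Sc S0]) (auto intro: continuous_intros)
  then have cs: "(integral {-1..1} (\<lambda>x. K x * S x))^2 \<le> integral {-1..1} (\<lambda>x. (K x)^2 * S x) * integral {-1..1} S"
    by simp
  have iC: "(\<lambda>x. (K x)^2 * S x) integrable_on {-1..1}"
    by (intro integrable_continuous_interval continuous_intros Kc Sc)
  have C0: "integral {-1..1} (\<lambda>x. (K x)^2 * S x) \<ge> 0" by (rule integral_nonneg[OF iC]) (use S0 in auto)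
  have "(integral {-1..1} (\<lambda>x. K x * S x))^2 > 0" using Ppos by simp
  then show ?thesis using cs C0
    by (metis less_eq_real_def mult_zero_left not_less)
qed

lemma flow_inner:
  assumes sm: "smooth_on U \<alpha>" and J: "open J" "u \<in> J"
    and JU: "\<And>v. v \<in> J \<Longrightarrow> (v, t) \<in> U" and Jnz: "\<And>v. v \<in> J \<Longrightarrow> pD1 \<alpha> (v, t) \<noteq> 0"
    and fl: "\<And>v. v \<in> J \<Longrightarrow> pD2 \<alpha> (v, t) = complex_of_real (F v) * normal \<alpha> (v, t)"
  shows "pD1 (pD2 \<alpha>) (u, t) \<bullet> tangent \<alpha> (u, t) = F u * cmod (pD1 \<alpha> (u, t)) * curv \<alpha> (u, t)"
proof -
  have p: "(u, t) \<in> U" and nz: "pD1 \<alpha> (u, t) \<noteq> 0" using J JU Jnz by auto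
  define Tp where "Tp = pD1 (tangent \<alpha>) (u, t)"
  have dT: "((\<lambda>v. tangent \<alpha> (v, t)) has_vector_derivative Tp) (at u)"
    using tangent_vd[OF sm p nz] vector_derivative_at[OF tangent_vd[OF sm p nz]]
    by (simp add: Tp_def pD1_def)
  have dA: "((\<lambda>v. pD2 \<alpha> (v, t)) has_vector_derivative pD1 (pD2 \<alpha>) (u, t)) (at u)"
    using sm_d1[OF sm p, of "[False]"] by simp
  have h1: "((\<lambda>v. pD2 \<alpha> (v, t) \<bullet> tangent \<alpha> (v, t)) has_real_derivative
      (pD2 \<alpha> (u, t) \<bullet> Tp + pD1 (pD2 \<alpha>) (u, t) \<bullet> tangent \<alpha> (u, t))) (at u)"
    by (rule inner_vd[OF dA dT])
  have z: "pD2 \<alpha> (v, t) \<bullet> tangent \<alpha> (v, t) = 0" if "v \<in> J" for v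
    using fl[OF that] by (simp add: normal_def inner_complex_def algebra_simps)
  have h0: "((\<lambda>v. pD2 \<alpha> (v, t) \<bullet> tangent \<alpha> (v, t)) has_real_derivative 0) (at u)"
    by (rule has_field_derivative_transform_within_open[OF DERIV_const J]) (use z in auto)
  have sum0: "pD2 \<alpha> (u, t) \<bullet> Tp + pD1 (pD2 \<alpha>) (u, t) \<bullet> tangent \<alpha> (u, t) = 0"
    using DERIV_unique[OF h1 h0] .
  have c1: "curv \<alpha> (u, t) = - (sdiff \<alpha> (tangent \<alpha>) (u, t) \<bullet> (\<i> * tangent \<alpha> (u, t)))"
    unfolding curv_def normal_def tangent_def[symmetric] ..
  have c2: "curv \<alpha> (u, t) = - ((1 / cmod (pD1 \<alpha> (u, t))) * (Tp \<bullet> (\<i> * tangent \<alpha> (u, t))))"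
    unfolding c1 sdiff_def Tp_def by simp
  have gp: "cmod (pD1 \<alpha> (u, t)) > 0" using nz by simp
  have c3: "Tp \<bullet> (\<i> * tangent \<alpha> (u, t)) = - (cmod (pD1 \<alpha> (u, t)) * curv \<alpha> (u, t))"
    using c2 gp by (simp add: field_simps)
  have "pD2 \<alpha> (u, t) \<bullet> Tp = F u * (Tp \<bullet> (\<i> * tangent \<alpha> (u, t)))"
    using fl[OF J(2)] by (simp add: normal_def inner_complex_def algebra_simps)
  then show ?thesis using sum0 c3 by (simp add: algebra_simps)
qed




lemma int_zero:
  assumes sm: "smooth_on U \<alpha>"
    and HU: "\<And>u. u \<in> {-1..1} \<Longrightarrow> (u, t) \<in> U"
    and Hnz: "\<And>u. u \<in> {-1..1} \<Longrightarrow> pD1 \<alpha> (u, t) \<noteq> 0"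
    and fl: "\<And>u. u \<in> {-1..1} \<Longrightarrow> pD2 \<alpha> (u, t) = complex_of_real (sdiff \<alpha> (sdiff \<alpha> (curv \<alpha>)) (u, t)
                           + 1/2 * (curv \<alpha> (u, t))^3
                           - elastic_lambda \<alpha> t * curv \<alpha> (u, t)) * normal \<alpha> (u, t)"
    and b1: "sdiff \<alpha> (curv \<alpha>) (-1, t) = 0" and b2: "sdiff \<alpha> (curv \<alpha>) (1, t) = 0"
    and tc: "arc_int \<alpha> t (curv \<alpha>) > 0"
  shows "integral {-1..1} (\<lambda>u. (pD1 \<alpha> (u, t) \<bullet> pD2 (pD1 \<alpha>) (u, t)) / cmod (pD1 \<alpha> (u, t))) = 0"
proof -
  define S where "S u = cmod (pD1 \<alpha> (u, t))" for u
  define K where "K u = curv \<alpha> (u, t)" for u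
  define Ks where "Ks u = sdiff \<alpha> (curv \<alpha>) (u, t)" for u
  define D where "D u = pD1 (sdiff \<alpha> (curv \<alpha>)) (u, t)" for u
  define lam where "lam = elastic_lambda \<alpha> t"
  define A where "A = integral {-1..1} (\<lambda>x. (Ks x)^2 * S x)"
  define B where "B = integral {-1..1} (\<lambda>x. (K x)^4 * S x)"
  define C where "C = integral {-1..1} (\<lambda>x. (K x)^2 * S x)"
  have Sc: "continuous_on {-1..1} S" unfolding S_def[abs_def] by (rule cont_S[OF sm HU])
  have Sp: "S x > 0" if "x \<in> {-1..1}" for x using Hnz[OF that] S_def by simp
  have S0: "S x \<ge> 0" if "x \<in> {-1..1}" for x using Sp[OF that] by simp
  have Kd: "(K has_real_derivative (Ks x * S x)) (at x within {-1..1})" if x: "x \<in> {-1..1}" for x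
  proof -
    have "(K has_real_derivative (Ks x * S x)) (at x)"
      using curv_deriv[OF sm HU[OF x] Hnz[OF x]] Ks_formula[OF sm HU[OF x] Hnz[OF x]]
      unfolding K_def[abs_def] Ks_def S_def by simp
    then show ?thesis by (rule has_field_derivative_at_within)
  qed
  have Ksc: "continuous_on {-1..1} Ks" unfolding Ks_def[abs_def] by (rule cont_Ks[OF sm HU Hnz])
  have Ksd: "(Ks has_real_derivative D x) (at x within {-1..1})" if x: "x \<in> {-1..1}" for x
    using Ks_deriv[OF sm HU[OF x] Hnz[OF x]] unfolding Ks_def[abs_def] D_def
    by (rule has_field_derivative_at_within)
  have Kc: "continuous_on {-1..1} K"
    by (rule continuous_on_eq_continuous_within[THEN iffD2]) (use Kd DERIV_continuous in blast)
  have ibp: "((\<lambda>x. K x * D x) has_integral - A) {-1..1}"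
    unfolding A_def by (rule ibp_len[OF Sc Kd Ksc Ksd]) (use b1 b2 Ks_def in auto)
  have Ppos: "integral {-1..1} (\<lambda>x. K x * S x) > 0" using tc by (simp add: arc_int_def K_def S_def)
  have Cp: "C > 0" unfolding C_def by (rule C_pos[OF Sc S0 Kc Ppos])
  have lam_eq: "lam = (- A + 1/2 * B) / C"
    by (simp add: lam_def elastic_lambda_def arc_int_def A_def B_def C_def Ks_def K_def S_def)
  have iB: "((\<lambda>x. (K x)^4 * S x) has_integral B) {-1..1}" unfolding B_def
    by (intro integrable_integral integrable_continuous_interval continuous_intros Kc Sc)
  have iC: "((\<lambda>x. (K x)^2 * S x) has_integral C) {-1..1}" unfolding C_def
    by (intro integrable_integral integrable_continuous_interval continuous_intros Kc Sc)
  have tot: "((\<lambda>x. K x * D x + 1/2 * ((K x)^4 * S x) - lam * ((K x)^2 * S x)) has_integral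
      (- A + 1/2 * B - lam * C)) {-1..1}"
    by (intro has_integral_diff has_integral_add has_integral_mult_right ibp iB iC)
  have tot0: "- A + 1/2 * B - lam * C = 0" using lam_eq Cp by simp
  have pt: "(pD1 \<alpha> (u, t) \<bullet> pD2 (pD1 \<alpha>) (u, t)) / cmod (pD1 \<alpha> (u, t))
      = K u * D u + 1/2 * ((K u)^4 * S u) - lam * ((K u)^2 * S u)"
    if u: "u \<in> {-1..1} - {-1, 1}" for u
  proof -
    define F where "F v = sdiff \<alpha> (sdiff \<alpha> (curv \<alpha>)) (v, t) + 1/2 * (curv \<alpha> (v, t))^3 - elastic_lambda \<alpha> t * curv \<alpha> (v, t)" for v
    have uJ: "u \<in> {-1<..<1}" using u by auto
    have fi: "pD1 (pD2 \<alpha>) (u, t) \<bullet> tangent \<alpha> (u, t) = F u * cmod (pD1 \<alpha> (u, t)) * curv \<alpha> (u, t)"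
      by (rule flow_inner[OF sm _ uJ]) (use HU Hnz fl F_def in auto)
    have sw: "pD2 (pD1 \<alpha>) (u, t) = pD1 (pD2 \<alpha>) (u, t)" using u HU by (intro schwarz[OF sm]) auto
    have "(pD1 \<alpha> (u, t) \<bullet> pD2 (pD1 \<alpha>) (u, t)) / cmod (pD1 \<alpha> (u, t)) = pD1 (pD2 \<alpha>) (u, t) \<bullet> tangent \<alpha> (u, t)"
      by (simp add: sw tangent_eq inner_commute divide_inverse mult.commute)
    also have "\<dots> = F u * S u * K u" using fi by (simp add: S_def K_def)
    also have "\<dots> = K u * D u + 1/2 * ((K u)^4 * S u) - lam * ((K u)^2 * S u)"
    proof -
      have Spu: "S u > 0" using Sp u by auto
      have "sdiff \<alpha> (sdiff \<alpha> (curv \<alpha>)) (u, t) = D u / S u"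
        by (simp add: sdiff_def D_def S_def)
      then show ?thesis using Spu
        by (simp add: F_def K_def lam_def field_simps power2_eq_square power4_eq_xxxx power3_eq_cube)
    qed
    finally show ?thesis .
  qed
  have "integral {-1..1} (\<lambda>u. (pD1 \<alpha> (u, t) \<bullet> pD2 (pD1 \<alpha>) (u, t)) / cmod (pD1 \<alpha> (u, t)))
      = integral {-1..1} (\<lambda>x. K x * D x + 1/2 * ((K x)^4 * S x) - lam * ((K x)^2 * S x))"
    by (rule integral_spike[of "{-1, 1}"]) (use pt in auto)
  also have "\<dots> = 0" using tot tot0 by (simp add: integral_unique)
  finally show ?thesis .
qed

lemma length_const:
  assumes sm: "smooth_on U \<alpha>" and t1: "0 \<le> t1"
    and box: "\<And>u s. u \<in> {-1..1} \<Longrightarrow> s \<in> {0..t1} \<Longrightarrow> (u, s) \<in> U \<and> pD1 \<alpha> (u, s) \<noteq> 0"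
    and zero: "\<And>s. s \<in> {0..t1} \<Longrightarrow>
        integral {-1..1} (\<lambda>u. (pD1 \<alpha> (u, s) \<bullet> pD2 (pD1 \<alpha>) (u, s)) / cmod (pD1 \<alpha> (u, s))) = 0"
  shows "curve_length \<alpha> t1 = curve_length \<alpha> 0"
proof -
  define fx where "fx s u = (pD1 \<alpha> (u, s) \<bullet> pD2 (pD1 \<alpha>) (u, s)) / cmod (pD1 \<alpha> (u, s))" for s u
  have len: "curve_length \<alpha> s = integral (cbox (-1) 1) (\<lambda>u. cmod (pD1 \<alpha> (u, s)))" for s
    by (simp add: curve_length_def arc_int_def cbox_interval)
  have der: "((\<lambda>s. integral (cbox (-1) 1) (\<lambda>u. cmod (pD1 \<alpha> (u, s)))) has_field_derivative
      integral (cbox (-1) 1) (fx s0)) (at s0 within {0..t1})" if s0: "s0 \<in> {0..t1}" for s0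
  proof (rule leibniz_rule_field_derivative[where fx=fx])
    fix s u assume s: "s \<in> {0..t1}" and u: "u \<in> cbox (-1::real) 1"
    have uu: "u \<in> {-1..1}" using u by (simp add: cbox_interval)
    have p: "(u, s) \<in> U" and nz: "pD1 \<alpha> (u, s) \<noteq> 0" using box[OF uu s] by auto
    have "((\<lambda>s. pD1 \<alpha> (u, s)) has_vector_derivative pD2 (pD1 \<alpha>) (u, s)) (at s)"
      using sm_d2[OF sm p, of "[True]"] by simp
    from norm_vd[OF this nz] show "((\<lambda>s. cmod (pD1 \<alpha> (u, s))) has_field_derivative fx s u) (at s within {0..t1})"
      unfolding fx_def by (rule has_field_derivative_at_within)
  next
    fix s assume s: "s \<in> {0..t1}"
    have "continuous_on (cbox (-1) 1) (\<lambda>u. cmod (pD1 \<alpha> (u, s)))"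
      by (rule cont_S[OF sm]) (use box s in \<open>auto simp: cbox_interval\<close>)
    then show "(\<lambda>u. cmod (pD1 \<alpha> (u, s))) integrable_on cbox (-1) 1" by (rule integrable_continuous)
  next
    have sub: "(\<lambda>q. (snd q, fst q)) ` ({0..t1} \<times> cbox (-1) 1) \<subseteq> U" using box by (auto simp: cbox_interval)
    have sw: "continuous_on ({0..t1} \<times> cbox (-1::real) 1) (\<lambda>q::real\<times>real. (snd q, fst q))"
      by (intro continuous_intros)
    have c1': "continuous_on ({0..t1} \<times> cbox (-1) 1) (\<lambda>q. pD1 \<alpha> (snd q, fst q))"
      by (rule continuous_on_compose2[OF sm_cont1[OF sm] sw sub])
    have c2': "continuous_on ({0..t1} \<times> cbox (-1) 1) (\<lambda>q. pD2 (pD1 \<alpha>) (snd q, fst q))"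
      by (rule continuous_on_compose2[OF _ sw sub]) (use sm_cont[OF sm, of "[False, True]"] in simp)
    have c1: "continuous_on ({0..t1} \<times> cbox (-1) 1) (\<lambda>(s, u). pD1 \<alpha> (u, s))"
      using c1' by (simp add: case_prod_beta)
    have c2: "continuous_on ({0..t1} \<times> cbox (-1) 1) (\<lambda>(s, u). pD2 (pD1 \<alpha>) (u, s))"
      using c2' by (simp add: case_prod_beta)
    have nz: "\<And>q. q \<in> {0..t1} \<times> cbox (-1) 1 \<Longrightarrow> (case q of (s, u) \<Rightarrow> pD1 \<alpha> (u, s)) \<noteq> 0"
      using box by (auto simp: cbox_interval)
    have "continuous_on ({0..t1} \<times> cbox (-1) 1)
        (\<lambda>q. ((case q of (s, u) \<Rightarrow> pD1 \<alpha> (u, s)) \<bullet> (case q of (s, u) \<Rightarrow> pD2 (pD1 \<alpha>) (u, s)))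
           / cmod (case q of (s, u) \<Rightarrow> pD1 \<alpha> (u, s)))"
      by (intro continuous_intros c1 c2) (use nz in auto)
    then show "continuous_on ({0..t1} \<times> cbox (-1) 1) (\<lambda>(s, u). fx s u)"
      by (simp add: fx_def case_prod_beta)
  next
    show "s0 \<in> {0..t1}" by (rule s0)
    show "convex {0..t1::real}" by simp
  qed
  have der0: "((\<lambda>s. curve_length \<alpha> s) has_field_derivative 0) (at s0 within {0..t1})" if s0: "s0 \<in> {0..t1}" for s0
    using der[OF s0] zero[OF s0] unfolding len by (simp add: fx_def[abs_def] cbox_interval)
  obtain c where "\<forall>x\<in>{0..t1}. curve_length \<alpha> x = c"
    using has_field_derivative_zero_constant[of "{0..t1}" "curve_length \<alpha>"] der0 by auto
  then show ?thesis using t1 by auto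
qed




theorem mainTheorem5:
  fixes \<alpha> :: "real \<times> real \<Rightarrow> complex" and \<theta>1 \<theta>2 T \<omega> :: real and U :: "(real \<times> real) set"
  assumes angles: "0 \<le> \<theta>2" "\<theta>2 < \<theta>1" "\<theta>1 < 2 * pi"
    and omega: "\<omega> = (\<theta>1 - \<theta>2) / (2 * pi)"
    and smooth: "smooth_on U \<alpha>" "{-1..1} \<times> {0..<T} \<subseteq> U"
    and regular: "\<forall>u\<in>{-1..1}. \<forall>t\<in>{0..<T}. pD1 \<alpha> (u, t) \<noteq> 0"
    and flow: "\<forall>u\<in>{-1..1}. \<forall>t\<in>{0..<T}.
       pD2 \<alpha> (u, t) = complex_of_real (sdiff \<alpha> (sdiff \<alpha> (curv \<alpha>)) (u, t)
                           + 1/2 * (curv \<alpha> (u, t))^3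
                           - elastic_lambda \<alpha> t * curv \<alpha> (u, t)) * normal \<alpha> (u, t)"
    and bc: "\<forall>t\<in>{0..<T}. gen_neumann \<theta>1 \<theta>2 \<alpha> t"
    and total_curv: "\<forall>t\<in>{0..<T}. arc_int \<alpha> t (curv \<alpha>) = 2 * pi * \<omega>"
  shows "\<forall>t\<in>{0..<T}.
     - (curve_length \<alpha> 0 * arc_int \<alpha> t (\<lambda>p. (sdiff \<alpha> (curv \<alpha>) p)^2)) / (2 * pi * \<omega>)^2
        \<le> elastic_lambda \<alpha> t \<and>
     elastic_lambda \<alpha> t
        \<le> 2 * curve_length \<alpha> 0 / pi * arc_int \<alpha> t (\<lambda>p. (sdiff \<alpha> (curv \<alpha>) p)^2)
          + (mean_curv \<alpha> t)^2"
proof (intro ballI)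
  fix t assume t: "t \<in> {0..<T}"
  note sm = smooth(1)
  have Pw: "2 * pi * \<omega> = \<theta>1 - \<theta>2" using omega by simp
  have Ppos: "2 * pi * \<omega> > 0" using Pw angles by simp
  have HU: "(u, s) \<in> U" if "u \<in> {-1..1}" "s \<in> {0..<T}" for u s using smooth(2) that by auto
  have NZ: "pD1 \<alpha> (u, s) \<noteq> 0" if "u \<in> {-1..1}" "s \<in> {0..<T}" for u s using regular that by auto
  have zero: "integral {-1..1} (\<lambda>u. (pD1 \<alpha> (u, s) \<bullet> pD2 (pD1 \<alpha>) (u, s)) / cmod (pD1 \<alpha> (u, s))) = 0"
    if s: "s \<in> {0..<T}" for s
  proof (rule int_zero[OF sm])
    show "\<And>u::real. u \<in> {-1..1} \<Longrightarrow> (u, s) \<in> U" using HU s by auto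
    show "\<And>u::real. u \<in> {-1..1} \<Longrightarrow> pD1 \<alpha> (u, s) \<noteq> 0" using NZ s by auto
    show "\<And>u::real. u \<in> {-1..1} \<Longrightarrow> pD2 \<alpha> (u, s) = complex_of_real (sdiff \<alpha> (sdiff \<alpha> (curv \<alpha>)) (u, s)
                           + 1/2 * (curv \<alpha> (u, s))^3
                           - elastic_lambda \<alpha> s * curv \<alpha> (u, s)) * normal \<alpha> (u, s)"
      using flow s by auto
    show "sdiff \<alpha> (curv \<alpha>) (-1, s) = 0" "sdiff \<alpha> (curv \<alpha>) (1, s) = 0"
      using bc s by (auto simp: gen_neumann_def)
    show "arc_int \<alpha> s (curv \<alpha>) > 0" using total_curv s Ppos by auto
  qed
  have t0: "0 \<le> t" using t by simp
  have Lc: "curve_length \<alpha> t = curve_length \<alpha> 0"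
  proof (rule length_const[OF sm t0])
    fix u s :: real assume "u \<in> {-1..1}" "s \<in> {0..t}"
    then show "(u, s) \<in> U \<and> pD1 \<alpha> (u, s) \<noteq> 0" using HU NZ t by auto
  next
    fix s :: real assume "s \<in> {0..t}"
    then show "integral {-1..1} (\<lambda>u. (pD1 \<alpha> (u, s) \<bullet> pD2 (pD1 \<alpha>) (u, s)) / cmod (pD1 \<alpha> (u, s))) = 0"
      using zero t by auto
  qed
  define S where "S u = cmod (pD1 \<alpha> (u, t))" for u
  define K where "K u = curv \<alpha> (u, t)" for u
  define Ks where "Ks u = sdiff \<alpha> (curv \<alpha>) (u, t)" for u
  have HUt: "\<And>u. u \<in> {-1..1} \<Longrightarrow> (u, t) \<in> U" using HU t by auto
  have NZt: "\<And>u. u \<in> {-1..1} \<Longrightarrow> pD1 \<alpha> (u, t) \<noteq> 0" using NZ t by auto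
  have Sc: "continuous_on {-1..1} S" unfolding S_def[abs_def] by (rule cont_S[OF sm HUt])
  have S0: "S x \<ge> 0" if "x \<in> {-1..1}" for x using S_def by simp
  have Kd: "(K has_real_derivative (Ks x * S x)) (at x within {-1..1})" if x: "x \<in> {-1..1}" for x
  proof -
    have "(K has_real_derivative (Ks x * S x)) (at x)"
      using curv_deriv[OF sm HUt[OF x] NZt[OF x]] Ks_formula[OF sm HUt[OF x] NZt[OF x]]
      unfolding K_def[abs_def] Ks_def S_def by simp
    then show ?thesis by (rule has_field_derivative_at_within)
  qed
  have Ksc: "continuous_on {-1..1} Ks" unfolding Ks_def[abs_def] by (rule cont_Ks[OF sm HUt NZt])
  have P: "integral {-1..1} (\<lambda>x. K x * S x) = 2 * pi * \<omega>"
    using total_curv t by (simp add: arc_int_def K_def S_def)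
  have Pp: "integral {-1..1} (\<lambda>x. K x * S x) > 0" using P Ppos by simp
  note st = static_bounds[OF Sc S0 Kd Ksc Pp]
  have e1: "curve_length \<alpha> 0 = integral {-1..1} S"
    using Lc by (simp add: curve_length_def arc_int_def S_def[abs_def])
  have e2: "arc_int \<alpha> t (\<lambda>p. (sdiff \<alpha> (curv \<alpha>) p)^2) = integral {-1..1} (\<lambda>x. (Ks x)^2 * S x)"
    by (simp add: arc_int_def Ks_def S_def)
  have e3: "elastic_lambda \<alpha> t = (- integral {-1..1} (\<lambda>x. (Ks x)^2 * S x) + 1/2 * integral {-1..1} (\<lambda>x. (K x)^4 * S x))
      / integral {-1..1} (\<lambda>x. (K x)^2 * S x)"
    by (simp add: elastic_lambda_def arc_int_def Ks_def K_def S_def)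
  have e4: "mean_curv \<alpha> t = integral {-1..1} (\<lambda>x. K x * S x) / integral {-1..1} S"
    using Lc e1 by (simp add: mean_curv_def arc_int_def K_def S_def[abs_def])
  show "- (curve_length \<alpha> 0 * arc_int \<alpha> t (\<lambda>p. (sdiff \<alpha> (curv \<alpha>) p)^2)) / (2 * pi * \<omega>)^2
        \<le> elastic_lambda \<alpha> t \<and>
     elastic_lambda \<alpha> t
        \<le> 2 * curve_length \<alpha> 0 / pi * arc_int \<alpha> t (\<lambda>p. (sdiff \<alpha> (curv \<alpha>) p)^2)
          + (mean_curv \<alpha> t)^2"
    unfolding e1 e2 e3 e4 P[symmetric] using st .
qed


end
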